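(* Let $(X,Y)\in[0,2\pi]\times\mathbb{R}$ be random variables with $\mathbb{E}[Y^2]<\infty$, $X$ uniformly distributed on $[0,2\pi]$, and let $s_*(X)=\mathbb{E}[Y\mid X]$. Fix $\nu>1/2$, $L_1,L_2>0$ and assume $s_*\in\Lambda_\nu(L_1,L_2)$. Let $m=\mathrm{Span}\{\varphi_1,\dots,\varphi_D\}$ (the first $D$ Fourier functions), let $s_m$ be the orthogonal projection of $s_*$ onto $m$ in $L_2(P^X)$, set $\zeta=Y-s_m(X)$, and assume $\zeta$ is independent of $X$ and $\mathbb{E}\zeta^2\leq\sigma^2$ for some $\sigma>0$. Given an i.i.d. sample $(X_i,Y_i)_{i=1}^n$ distributed as $(X,Y)$, let $\hat s_m\in\arg\min_{s\in m}\frac1n\sum_{i=1}^n(Y_i-s(X_i))^2$. Then there exist constants $L_\nu$ (depending only on $\nu$), $L_{L_1,L_2,\sigma,\nu}$ (depending only on $L_1,L_2,\sigma,\nu$), $C_{\nu,L_1,L_2}>0$ and $\beta_0>0$ (depending only on $\nu,L_1,L_2$), and an integer $n_0(\nu,L_1,L_2)$ such that, if \[ 0<\big(2\sqrt2L_1L_2^{-1}\big)^{1/\nu}\leq D\leq L_\nu\Big(\frac{n}{\ln n}\Big)^{\frac1{2(\nu+1)}} \] and $x\in\big(0,\,L_{L_1,L_2,\sigma,\nu}\,n/D^{2(\nu+1)}\big)$, then for every $n\geq n_0(\nu,L_1,L_2)$, on an event of probability at least $1-\exp(-\beta_0^2n/4)-n^{-2}-2/x$, \[ \|\hat s_m-s_m\|_2^2\leq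 C_{\nu,L_1,L_2}\frac{\sigma^2Dx}{n}. \]
   Context: Fourier functions: $\varphi_1\equiv1$, $\varphi_{2k}(x)=\sqrt2\cos(kx)$, $\varphi_{2k+1}(x)=\sqrt2\sin(kx)$ for $k\geq1$; $\langle f,g\rangle=\int fg\,dP^X$ with $P^X$ uniform on $[0,2\pi]$, $\|\cdot\|_2$ the associated norm, $\beta_k(f)=\langle f,\varphi_k\rangle$ for $2\pi$-periodic $f$. For $\nu,L_1,L_2>0$, $\Lambda_\nu(L_1,L_2)=\{f\in L_\infty(\mathbb{T}):\sum_{k\geq1}k^\nu|\beta_k(f)|\leq L_1\text{ and }\|f\|_\infty\geq L_2\}$, where $L_\infty(\mathbb{T})$ denotes bounded $2\pi$-periodic functions. *)

theory Defs
  imports "HOL-Probability.Probability"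
begin

text \<open>Fourier functions: phi 1 = 1, phi (2k) = sqrt 2 cos(k x), phi (2k+1) = sqrt 2 sin(k x), k >= 1.
  (The value at index 0 is irrelevant and never used.)\<close>
definition phi :: "nat \<Rightarrow> real \<Rightarrow> real" where
  "phi j x = (if j = 1 then 1
              else if even j then sqrt 2 * cos (real (j div 2) * x)
              else sqrt 2 * sin (real (j div 2) * x))"

definition PX :: "real measure" where
  "PX = uniform_measure lborel {0..2*pi}"

definition inner_PX :: "(real \<Rightarrow> real) \<Rightarrow> (real \<Rightarrow> real) \<Rightarrow> real" where
  "inner_PX f g = (\<integral>x. f x * g x \<partial>PX)"

definition norm2_sq :: "(real \<Rightarrow> real) \<Rightarrow> real" where
  "norm2_sq f = (\<integral>x. (f x)^2 \<partial>PX)"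

definition beta :: "nat \<Rightarrow> (real \<Rightarrow> real) \<Rightarrow> real" where
  "beta k f = inner_PX f (phi k)"

definition Linf_T :: "(real \<Rightarrow> real) set" where
  "Linf_T = {f. f \<in> borel_measurable borel \<and> (\<forall>x. f (x + 2*pi) = f x) \<and> bounded (range f)}"

definition norm_inf :: "(real \<Rightarrow> real) \<Rightarrow> ereal" where
  "norm_inf f = esssup lborel (\<lambda>x. ereal \<bar>f x\<bar>)"

definition Lambda :: "real \<Rightarrow> real \<Rightarrow> real \<Rightarrow> (real \<Rightarrow> real) set" where
  "Lambda \<nu> L1 L2 = {f \<in> Linf_T.
      summable (\<lambda>k. real (Suc k) powr \<nu> * \<bar>beta (Suc k) f\<bar>) \<and>
      (\<Sum>k. real (Suc k) powr \<nu> * \<bar>beta (Suc k) f\<bar>) \<le> L1 \<and>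
      norm_inf f \<ge> ereal L2}"

definition model :: "nat \<Rightarrow> (real \<Rightarrow> real) set" where
  "model D = {s. \<exists>a::nat \<Rightarrow> real. s = (\<lambda>x. \<Sum>k=1..D. a k * phi k x)}"

definition emp_risk :: "nat \<Rightarrow> (nat \<Rightarrow> real \<times> real) \<Rightarrow> (real \<Rightarrow> real) \<Rightarrow> real" where
  "emp_risk n \<omega> s = (1 / real n) * (\<Sum>i=1..n. (snd (\<omega> i) - s (fst (\<omega> i)))^2)"

end

theory Submission imports Defs begin


lemma Dsin: fixes m :: int assumes "m \<noteq> 0" shows "((\<lambda>x. sin (real_of_int m * x) / real_of_int m) has_vector_derivative cos (real_of_int m * x)) (at x within S)"
proof -
  have "((\<lambda>x. sin (real_of_int m * x) / real_of_int m) has_real_derivative (cos (real_of_int m * x) * real_of_int m) / real_of_int m) (at x)"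
    by (intro DERIV_cdivide DERIV_fun_sin DERIV_cmult_Id)
  then show ?thesis using assms 
    by (simp add: has_real_derivative_iff_has_vector_derivative has_vector_derivative_at_within)
qed
lemma Dcos: fixes m :: int assumes "m \<noteq> 0" shows "((\<lambda>x. - cos (real_of_int m * x) / real_of_int m) has_vector_derivative sin (real_of_int m * x)) (at x within S)"
proof -
  have "((\<lambda>x. - cos (real_of_int m * x) / real_of_int m) has_real_derivative (- (- sin (real_of_int m * x) * real_of_int m)) / real_of_int m) (at x)"
    by (intro DERIV_cdivide DERIV_minus DERIV_fun_cos DERIV_cmult_Id)
  then show ?thesis using assms 
    by (simp add: has_real_derivative_iff_has_vector_derivative has_vector_derivative_at_within)
qed
lemma H_cos: "((\<lambda>x. cos (real_of_int m * x)) has_integral (if m = 0 then 2*pi else 0)) {0..2*pi}"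
proof (cases "m = 0")
  case True then show ?thesis using has_integral_const_real[of "1::real" 0 "2*pi"] by (simp del: has_integral_const_real)
next
  case False
  have "((\<lambda>x. cos (real_of_int m * x)) has_integral
        (sin (real_of_int m * (2*pi)) / m - sin (real_of_int m * 0) / m)) {0..2*pi}"
    by (rule fundamental_theorem_of_calculus) (use False Dsin in auto)
  moreover have "sin (real_of_int m * (2*pi)) = 0"
    by (metis mult.commute sin_zero_iff_int2 mult.assoc of_int_mult of_int_numeral)
  ultimately show ?thesis using False by simp
qed

lemma H_sin: "((\<lambda>x. sin (real_of_int m * x)) has_integral 0) {0..2*pi}"
proof (cases "m = 0")
  case True then show ?thesis by simp
next
  case False
  have "((\<lambda>x. sin (real_of_int m * x)) has_integral
        (- cos (real_of_int m * (2*pi)) / m - (- cos (real_of_int m * 0) / m))) {0..2*pi}"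
    by (rule fundamental_theorem_of_calculus) (use False Dcos in auto)
  moreover have "cos (real_of_int m * (2*pi)) = 1"
    by (metis cos_int_2pin mult.commute)
  ultimately show ?thesis using False by simp
qed
lemma H_comb: "((\<lambda>x. \<alpha> * cos (real_of_int a * x) + \<beta> * cos (real_of_int b * x) + \<gamma> * sin (real_of_int c * x))
   has_integral (\<alpha> * (if a = 0 then 2*pi else 0) + \<beta> * (if b = 0 then 2*pi else 0))) {0..2*pi}"
proof -
  have "((\<lambda>x. \<alpha> * cos (real_of_int a * x) + \<beta> * cos (real_of_int b * x) + \<gamma> * sin (real_of_int c * x))
   has_integral (\<alpha> * (if a = 0 then 2*pi else 0) + \<beta> * (if b = 0 then 2*pi else 0) + \<gamma> * 0)) {0..2*pi}"
    by (intro has_integral_add has_integral_mult_right H_cos H_sin)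
  then show ?thesis by simp
qed

lemma phi_cases:
  "phi (Suc 0) x = 1"
  "even j \<Longrightarrow> phi j x = sqrt 2 * cos (real (j div 2) * x)"
  "odd j \<Longrightarrow> j \<noteq> 1 \<Longrightarrow> phi j x = sqrt 2 * sin (real (j div 2) * x)"
  by (auto simp: phi_def)

lemma t_cc: "sqrt 2 * cos a * (sqrt 2 * cos b) = cos (a - b) + cos (a + b)"
proof -
  have "sqrt 2 * cos a * (sqrt 2 * cos b) = (sqrt 2 * sqrt 2) * (cos a * cos b)" by (simp only: ac_simps)
  also have "\<dots> = cos (a - b) + cos (a + b)" by (simp add: cos_times_cos)
  finally show ?thesis .
qed
lemma t_ss: "sqrt 2 * sin a * (sqrt 2 * sin b) = cos (a - b) - cos (a + b)"
proof -
  have "sqrt 2 * sin a * (sqrt 2 * sin b) = (sqrt 2 * sqrt 2) * (sin a * sin b)" by (simp only: ac_simps)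
  also have "\<dots> = cos (a - b) - cos (a + b)" by (simp add: sin_times_sin)
  finally show ?thesis .
qed
lemma t_cs: "sqrt 2 * cos a * (sqrt 2 * sin b) = sin (b + a) + sin (b - a)"
proof -
  have "sqrt 2 * cos a * (sqrt 2 * sin b) = (sqrt 2 * sqrt 2) * (sin b * cos a)" by (simp only: ac_simps)
  also have "\<dots> = sin (b + a) + sin (b - a)" by (simp add: sin_times_cos)
  finally show ?thesis .
qed
lemma t_sc: "sqrt 2 * sin a * (sqrt 2 * cos b) = sin (a + b) + sin (a - b)"
proof -
  have "sqrt 2 * sin a * (sqrt 2 * cos b) = (sqrt 2 * sqrt 2) * (sin a * cos b)" by (simp only: ac_simps)
  also have "\<dots> = sin (a + b) + sin (a - b)" by (simp add: sin_times_cos)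
  finally show ?thesis .
qed

lemma ortho_HK:
  assumes j: "j \<ge> 1" and k: "k \<ge> 1"
  shows "((\<lambda>x. phi j x * phi k x) has_integral (if j = k then 2*pi else 0)) {0..2*pi}"
proof -
  define p where "p = j div 2"
  define q where "q = k div 2"
  have s2: "sqrt 2 * sqrt 2 = (2::real)" by simp
  consider "j = 1" "k = 1" | "j = 1" "k \<noteq> 1" | "j \<noteq> 1" "k = 1" | "j \<noteq> 1" "k \<noteq> 1"
    by blast
  then show ?thesis
  proof cases
    case 1
    then show ?thesis using H_comb[of 1 0 0 0 0 0] by (simp add: phi_def)
  next
    case 2
    have qp: "q \<ge> 1" using 2 k unfolding q_def by linarith
    show ?thesis
    proof (cases "even k")
      case True
      have "(\<lambda>x. phi j x * phi k x) = (\<lambda>x. sqrt 2 * cos (real_of_int (int q) * x) + 0 * cos (real_of_int 0 * x) + 0 * sin (real_of_int 0 * x))"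
        using 2 True by (auto simp: phi_cases q_def)
      then show ?thesis using H_comb[of "sqrt 2" "int q" 0 0 0 0] qp 2 by simp
    next
      case False
      have "(\<lambda>x. phi j x * phi k x) = (\<lambda>x. 0 * cos (real_of_int (int q) * x) + 0 * cos (real_of_int 0 * x) + sqrt 2 * sin (real_of_int (int q) * x))"
        using 2 False by (auto simp: phi_cases q_def)
      then show ?thesis using H_comb[of 0 "int q" 0 0 "sqrt 2" "int q"] qp 2 by simp
    qed
  next
    case 3
    have pp: "p \<ge> 1" using 3 j unfolding p_def by linarith
    show ?thesis
    proof (cases "even j")
      case True
      have "(\<lambda>x. phi j x * phi k x) = (\<lambda>x. sqrt 2 * cos (real_of_int (int p) * x) + 0 * cos (real_of_int 0 * x) + 0 * sin (real_of_int 0 * x))"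
        using 3 True by (auto simp: phi_cases p_def)
      then show ?thesis using H_comb[of "sqrt 2" "int p" 0 0 0 0] pp 3 by simp
    next
      case False
      have "(\<lambda>x. phi j x * phi k x) = (\<lambda>x. 0 * cos (real_of_int (int p) * x) + 0 * cos (real_of_int 0 * x) + sqrt 2 * sin (real_of_int (int p) * x))"
        using 3 False by (auto simp: phi_cases p_def)
      then show ?thesis using H_comb[of 0 "int p" 0 0 "sqrt 2" "int p"] pp 3 by simp
    qed
  next
    case 4
    have pp: "p \<ge> 1" using 4 j unfolding p_def by linarith
    have qp: "q \<ge> 1" using 4 k unfolding q_def by linarith
    have e1: "real_of_int (int p - int q) * x = real p * x - real q * x" for x by (simp add: algebra_simps)
    have e2: "real_of_int (int p + int q) * x = real p * x + real q * x" for x by (simp add: algebra_simps)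
    have e3: "real_of_int (int q - int p) * x = real q * x - real p * x" for x by (simp add: algebra_simps)
    have e4: "real_of_int (int q + int p) * x = real q * x + real p * x" for x by (simp add: algebra_simps)
    have jk: "j = k \<longleftrightarrow> (p = q \<and> (even j \<longleftrightarrow> even k))" unfolding p_def q_def
      by (metis dvd_mult_div_cancel odd_two_times_div_two_succ)
    consider "even j" "even k" | "odd j" "odd k" | "even j" "odd k" | "odd j" "even k" by blast
    consider "even j" "even k" | "odd j" "odd k" | "even j" "odd k" | "odd j" "even k" by blast
    then show ?thesis
    proof cases
      case 1
      have "phi j x * phi k x = 1 * cos (real_of_int (int p - int q) * x) + 1 * cos (real_of_int (int p + int q) * x) + 0 * sin (real_of_int 0 * x)" for x
        using 1 unfolding e1 e2 p_def q_def by (simp add: phi_cases t_cc left_diff_distrib distrib_right)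
      then have "(\<lambda>x. phi j x * phi k x) = (\<lambda>x. 1 * cos (real_of_int (int p - int q) * x) + 1 * cos (real_of_int (int p + int q) * x) + 0 * sin (real_of_int 0 * x))"
        by blast
      then show ?thesis using H_comb[of 1 "int p - int q" 1 "int p + int q" 0 0] pp qp 1 jk by auto
    next
      case 2
      have "phi j x * phi k x = 1 * cos (real_of_int (int p - int q) * x) + (-1) * cos (real_of_int (int p + int q) * x) + 0 * sin (real_of_int 0 * x)" for x
        using 2 4 unfolding e1 e2 p_def q_def by (simp add: phi_cases t_ss left_diff_distrib distrib_right)
      then have "(\<lambda>x. phi j x * phi k x) = (\<lambda>x. 1 * cos (real_of_int (int p - int q) * x) + (-1) * cos (real_of_int (int p + int q) * x) + 0 * sin (real_of_int 0 * x))"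
        by blast
      then show ?thesis using H_comb[of 1 "int p - int q" "-1" "int p + int q" 0 0] pp qp 2 jk by auto
    next
      case 3
      have "phi j x * phi k x = (0 * cos (real_of_int 0 * x) + 0 * cos (real_of_int 0 * x) + 1 * sin (real_of_int (int q + int p) * x)) + sin (real_of_int (int q - int p) * x)" for x
        using 3 4 unfolding e3 e4 p_def q_def by (simp add: phi_cases t_cs left_diff_distrib distrib_right)
      then have "(\<lambda>x. phi j x * phi k x) = (\<lambda>x. (0 * cos (real_of_int 0 * x) + 0 * cos (real_of_int 0 * x) + 1 * sin (real_of_int (int q + int p) * x)) + sin (real_of_int (int q - int p) * x))"
        by blast
      moreover have "((\<lambda>x. (0 * cos (real_of_int 0 * x) + 0 * cos (real_of_int 0 * x) + 1 * sin (real_of_int (int q + int p) * x)) + sin (real_of_int (int q - int p) * x)) has_integral 0) {0..2*pi}"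
        using has_integral_add[OF H_comb[of 0 0 0 0 1 "int q + int p"] H_sin[of "int q - int p"]] by simp
      ultimately show ?thesis using 3 by auto
    next
      case 4
      have "phi j x * phi k x = (0 * cos (real_of_int 0 * x) + 0 * cos (real_of_int 0 * x) + 1 * sin (real_of_int (int p + int q) * x)) + sin (real_of_int (int p - int q) * x)" for x
        using 4 \<open>j \<noteq> 1\<close> \<open>k \<noteq> 1\<close> unfolding e1 e2 p_def q_def by (simp add: phi_cases t_sc left_diff_distrib distrib_right)
      then have "(\<lambda>x. phi j x * phi k x) = (\<lambda>x. (0 * cos (real_of_int 0 * x) + 0 * cos (real_of_int 0 * x) + 1 * sin (real_of_int (int p + int q) * x)) + sin (real_of_int (int p - int q) * x))"
        by blast
      moreover have "((\<lambda>x. (0 * cos (real_of_int 0 * x) + 0 * cos (real_of_int 0 * x) + 1 * sin (real_of_int (int p + int q) * x)) + sin (real_of_int (int p - int q) * x)) has_integral 0) {0..2*pi}"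
        using has_integral_add[OF H_comb[of 0 0 0 0 1 "int p + int q"] H_sin[of "int p - int q"]] by simp
      ultimately show ?thesis using 4 by auto
    qed
  qed
qed

lemma PX_density: "PX = density lborel (\<lambda>x. ennreal (indicator {0..2*pi} x / (2*pi)))"
  unfolding PX_def uniform_measure_def
  apply (rule density_cong) apply simp_all
  apply (auto simp: indicator_def)
  using divide_ennreal[of 1 "2*pi"] by simp

lemma PX_integral_cont:
  fixes f :: "real \<Rightarrow> real"
  assumes c: "continuous_on UNIV f" and I: "(f has_integral I) {0..2*pi}"
  shows "integral\<^sup>L PX f = I / (2*pi)"
proof -
  have m: "f \<in> borel_measurable borel" using c by (simp add: borel_measurable_continuous_onI)
  have "integral\<^sup>L PX f = (\<integral>x. (indicator {0..2*pi} x / (2*pi)) *\<^sub>R f x \<partial>lborel)"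
    unfolding PX_density by (rule integral_density) (use m in auto)
  also have "\<dots> = (\<integral>x. (indicator {0..2*pi} x *\<^sub>R f x) / (2*pi) \<partial>lborel)"
    by (rule Bochner_Integration.integral_cong) auto
  also have "\<dots> = (\<integral>x. indicator {0..2*pi} x *\<^sub>R f x \<partial>lborel) / (2*pi)"
    by (rule integral_divide_zero)
  also have "(\<integral>x. indicator {0..2*pi} x *\<^sub>R f x \<partial>lborel) = integral {0..2*pi} f"
    using set_borel_integral_eq_integral(2)[OF borel_integrable_atLeastAtMost'[of 0 "2*pi" f]]
      continuous_on_subset[OF c] unfolding set_lebesgue_integral_def by blast
  also have "integral {0..2*pi} f = I" using I by (rule integral_unique)
  finally show ?thesis .
qed


lemma var_avg:
  fixes h :: "'a \<Rightarrow> real" and n :: nat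
  assumes ps: "prob_space \<mu>" and hm: "h \<in> borel_measurable \<mu>"
    and h2: "integrable \<mu> (\<lambda>p. (h p)^2)" and h0: "integral\<^sup>L \<mu> h = 0" and n: "n > 0"
  shows "integrable (PiM {1..n} (\<lambda>_. \<mu>)) (\<lambda>\<omega>. ((\<Sum>i=1..n. h (\<omega> i)) / n)^2)"
    "(\<integral>\<omega>. ((\<Sum>i=1..n. h (\<omega> i)) / n)^2 \<partial>PiM {1..n} (\<lambda>_. \<mu>)) = integral\<^sup>L \<mu> (\<lambda>p. (h p)^2) / n"
proof -
  interpret prob_space \<mu> by (rule ps)
  interpret PS: product_sigma_finite "\<lambda>_. \<mu>" by standard
  have hi: "integrable \<mu> h" by (rule square_integrable_imp_integrable[OF hm h2])
  define F where "F i l t = (\<lambda>x. (if t = i then h x else 1) * (if t = l then h x else (1::real)))" for i l t :: nat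
  have Fint: "integrable \<mu> (F i l t)" for i l t
    using h2 hi unfolding F_def by (cases "t = i"; cases "t = l") (auto simp: power2_eq_square)
  have Fval: "integral\<^sup>L \<mu> (F i l t) = (if t = i \<and> t = l then integral\<^sup>L \<mu> (\<lambda>p. (h p)^2) else if t = i \<or> t = l then 0 else 1)" for i l t
    using h0 unfolding F_def by (auto simp: power2_eq_square prob_space)
  have prodF: "(\<Prod>t\<in>{1..n}. F i l t (\<omega> t)) = h (\<omega> i) * h (\<omega> l)" if "i \<in> {1..n}" "l \<in> {1..n}" for i l \<omega>
    using that unfolding F_def prod.distrib by (simp add: prod.delta)
  have pint: "integrable (PiM {1..n} (\<lambda>_. \<mu>)) (\<lambda>\<omega>. h (\<omega> i) * h (\<omega> l))"
   and pval: "(\<integral>\<omega>. h (\<omega> i) * h (\<omega> l) \<partial>PiM {1..n} (\<lambda>_. \<mu>)) = (if i = l then integral\<^sup>L \<mu> (\<lambda>p. (h p)^2) else 0)"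
   if "i \<in> {1..n}" "l \<in> {1..n}" for i l
  proof -
    have "integrable (PiM {1..n} (\<lambda>_. \<mu>)) (\<lambda>\<omega>. \<Prod>t\<in>{1..n}. F i l t (\<omega> t))"
      by (rule PS.product_integrable_prod) (auto intro: Fint)
    then show "integrable (PiM {1..n} (\<lambda>_. \<mu>)) (\<lambda>\<omega>. h (\<omega> i) * h (\<omega> l))"
      using prodF[OF that] by simp
    have "(\<integral>\<omega>. (\<Prod>t\<in>{1..n}. F i l t (\<omega> t)) \<partial>PiM {1..n} (\<lambda>_. \<mu>)) = (\<Prod>t\<in>{1..n}. integral\<^sup>L \<mu> (F i l t))"
      by (rule PS.product_integral_prod) (auto intro: Fint)
    also have "\<dots> = (if i = l then integral\<^sup>L \<mu> (\<lambda>p. (h p)^2) else 0)"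
    proof (cases "i = l")
      case True
      have "(\<Prod>t\<in>{1..n}. integral\<^sup>L \<mu> (F i l t)) = (\<Prod>t\<in>{1..n}. if t = i then integral\<^sup>L \<mu> (\<lambda>p. (h p)^2) else 1)"
        using True by (intro prod.cong refl) (simp add: Fval)
      then show ?thesis using that True by (simp add: prod.delta)
    next
      case False
      have "integral\<^sup>L \<mu> (F i l i) = 0" using False by (simp add: Fval)
      then show ?thesis using False that by (simp add: prod_zero_iff) (metis atLeastAtMost_iff One_nat_def)
    qed
    finally show "(\<integral>\<omega>. h (\<omega> i) * h (\<omega> l) \<partial>PiM {1..n} (\<lambda>_. \<mu>)) = (if i = l then integral\<^sup>L \<mu> (\<lambda>p. (h p)^2) else 0)"
      using prodF[OF that] by simp
  qed
  have sq: "((\<Sum>i=1..n. h (\<omega> i)) / n)^2 = (\<Sum>i=1..n. \<Sum>l=1..n. h (\<omega> i) * h (\<omega> l)) / (real n)^2" for \<omega>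
    by (simp add: power2_eq_square sum_product power_divide)
  have I1: "integrable (PiM {1..n} (\<lambda>_. \<mu>)) (\<lambda>\<omega>. \<Sum>i=1..n. \<Sum>l=1..n. h (\<omega> i) * h (\<omega> l))"
    by (intro Bochner_Integration.integrable_sum pint) auto
  then show "integrable (PiM {1..n} (\<lambda>_. \<mu>)) (\<lambda>\<omega>. ((\<Sum>i=1..n. h (\<omega> i)) / n)^2)"
    unfolding sq by (rule integrable_divide_zero)
  have "(\<integral>\<omega>. (\<Sum>i=1..n. \<Sum>l=1..n. h (\<omega> i) * h (\<omega> l)) \<partial>PiM {1..n} (\<lambda>_. \<mu>))
      = (\<Sum>i=1..n. (\<integral>\<omega>. (\<Sum>l=1..n. h (\<omega> i) * h (\<omega> l)) \<partial>PiM {1..n} (\<lambda>_. \<mu>)))"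
    by (rule Bochner_Integration.integral_sum) (intro Bochner_Integration.integrable_sum pint; auto)
  also have "\<dots> = (\<Sum>i=1..n. \<Sum>l=1..n. (\<integral>\<omega>. h (\<omega> i) * h (\<omega> l) \<partial>PiM {1..n} (\<lambda>_. \<mu>)))"
    by (intro sum.cong refl Bochner_Integration.integral_sum pint; auto)
  also have "\<dots> = (\<Sum>i=1..n. \<Sum>l=1..n. (if i = l then integral\<^sup>L \<mu> (\<lambda>p. (h p)^2) else 0))"
    by (intro sum.cong refl pval) auto
  also have "\<dots> = real n * integral\<^sup>L \<mu> (\<lambda>p. (h p)^2)"
    by (simp add: sum.delta)
  finally have "(\<integral>\<omega>. (\<Sum>i=1..n. \<Sum>l=1..n. h (\<omega> i) * h (\<omega> l)) \<partial>PiM {1..n} (\<lambda>_. \<mu>)) = real n * integral\<^sup>L \<mu> (\<lambda>p. (h p)^2)" .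
  then show "(\<integral>\<omega>. ((\<Sum>i=1..n. h (\<omega> i)) / n)^2 \<partial>PiM {1..n} (\<lambda>_. \<mu>)) = integral\<^sup>L \<mu> (\<lambda>p. (h p)^2) / n"
    unfolding sq using n by (simp add: power2_eq_square)
qed


lemma CS_double:
  fixes c :: "nat \<Rightarrow> real" and M :: "nat \<Rightarrow> nat \<Rightarrow> real"
  shows "(\<Sum>j\<in>S. \<Sum>k\<in>S. c j * c k * M j k)^2 \<le> (\<Sum>k\<in>S. (c k)^2)^2 * (\<Sum>j\<in>S. \<Sum>k\<in>S. (M j k)^2)"
proof -
  have "(\<Sum>j\<in>S. \<Sum>k\<in>S. c j * c k * M j k) = (\<Sum>(j,k)\<in>S\<times>S. (c j * c k) * M j k)"
    by (simp add: sum.cartesian_product)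
  moreover have "(\<Sum>j\<in>S. \<Sum>k\<in>S. (M j k)^2) = (\<Sum>(j,k)\<in>S\<times>S. (M j k)^2)"
    by (simp add: sum.cartesian_product)
  moreover have "(\<Sum>k\<in>S. (c k)^2)^2 = (\<Sum>(j,k)\<in>S\<times>S. (c j * c k)^2)"
    by (simp add: power2_eq_square sum_product sum.cartesian_product power_mult_distrib mult_ac)
  moreover have "(\<Sum>(j,k)\<in>S\<times>S. (c j * c k) * M j k)^2 \<le> (\<Sum>(j,k)\<in>S\<times>S. (c j * c k)^2) * (\<Sum>(j,k)\<in>S\<times>S. (M j k)^2)"
    using Cauchy_Schwarz_ineq_sum[of "\<lambda>p. c (fst p) * c (snd p)" "\<lambda>p. M (fst p) (snd p)" "S\<times>S"]
    by (simp add: case_prod_beta)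
  ultimately show ?thesis by simp
qed

lemma det_bound:
  fixes c :: "nat \<Rightarrow> real" and Xs Zs :: "nat \<Rightarrow> real" and f :: "nat \<Rightarrow> real \<Rightarrow> real" and n D :: nat
  assumes n: "n > 0"
    and opt: "(\<Sum>i=1..n. (Zs i - (\<Sum>k=1..D. c k * f k (Xs i)))^2) \<le> (\<Sum>i=1..n. (Zs i)^2)"
    and SM: "(\<Sum>j=1..D. \<Sum>k=1..D. ((\<Sum>i=1..n. f j (Xs i) * f k (Xs i) - (if j = k then 1 else 0)) / n)^2) \<le> 1/4"
  shows "(\<Sum>k=1..D. (c k)^2) \<le> 16 * (\<Sum>k=1..D. ((\<Sum>i=1..n. Zs i * f k (Xs i)) / n)^2)"
proof -
  define g where "g i = (\<Sum>k=1..D. c k * f k (Xs i))" for i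
  define A where "A = (\<Sum>k=1..D. (c k)^2)"
  define M where "M j k = (\<Sum>i=1..n. f j (Xs i) * f k (Xs i) - (if j = k then 1 else 0)) / n" for j k
  define W where "W k = (\<Sum>i=1..n. Zs i * f k (Xs i)) / n" for k
  define Q where "Q = (\<Sum>j=1..D. \<Sum>k=1..D. c j * c k * M j k)"
  define R where "R = (\<Sum>k=1..D. c k * W k)"
  define SW where "SW = (\<Sum>k=1..D. (W k)^2)"
  have A0: "A \<ge> 0" unfolding A_def by (simp add: sum_nonneg)
  have SW0: "SW \<ge> 0" unfolding SW_def by (simp add: sum_nonneg)
  have "(\<Sum>i=1..n. (Zs i - g i)^2) = (\<Sum>i=1..n. (Zs i)^2) - 2 * (\<Sum>i=1..n. Zs i * g i) + (\<Sum>i=1..n. (g i)^2)"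
    by (simp add: power2_diff sum.distrib sum_subtractf sum_distrib_left mult.assoc)
  with opt have 1: "(\<Sum>i=1..n. (g i)^2) \<le> 2 * (\<Sum>i=1..n. Zs i * g i)" unfolding g_def by simp
  have nn: "real n \<noteq> 0" using n by simp
  have Mx: "(\<Sum>i=1..n. f j (Xs i) * f k (Xs i)) = n * M j k + n * (if j = k then 1 else (0::real))" for j k
    unfolding M_def using nn by (simp add: sum_subtractf)
  have "(\<Sum>i=1..n. (g i)^2) = (\<Sum>i=1..n. \<Sum>j=1..D. \<Sum>k=1..D. c j * c k * (f j (Xs i) * f k (Xs i)))"
    unfolding g_def power2_eq_square sum_product by (simp add: mult_ac)
  also have "\<dots> = (\<Sum>j=1..D. \<Sum>i=1..n. \<Sum>k=1..D. c j * c k * (f j (Xs i) * f k (Xs i)))"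
    by (rule sum.swap)
  also have "\<dots> = (\<Sum>j=1..D. \<Sum>k=1..D. \<Sum>i=1..n. c j * c k * (f j (Xs i) * f k (Xs i)))"
    by (intro sum.cong refl sum.swap)
  also have "\<dots> = (\<Sum>j=1..D. \<Sum>k=1..D. c j * c k * (\<Sum>i=1..n. f j (Xs i) * f k (Xs i)))"
    by (simp add: sum_distrib_left)
  also have "\<dots> = (\<Sum>j=1..D. \<Sum>k=1..D. n * (c j * c k * M j k) + n * (c j * c k * (if j = k then 1 else (0::real))))"
    unfolding Mx by (simp add: algebra_simps)
  also have "\<dots> = n * Q + n * (\<Sum>j=1..D. \<Sum>k=1..D. c j * c k * (if j = k then 1 else (0::real)))"
    unfolding Q_def by (simp add: sum.distrib sum_distrib_left)
  also have "(\<Sum>j=1..D. \<Sum>k=1..D. c j * c k * (if j = k then 1 else (0::real))) = A"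
  proof -
    have "(\<Sum>k=1..D. c j * c k * (if j = k then 1 else (0::real))) = (\<Sum>k=1..D. if j = k then c j * c j else 0)" for j
      by (intro sum.cong) auto
    then show ?thesis unfolding A_def by (simp add: sum.delta power2_eq_square)
  qed
  finally have 2: "(\<Sum>i=1..n. (g i)^2) = n * Q + n * A" .
  have "(\<Sum>i=1..n. Zs i * g i) = (\<Sum>k=1..D. c k * (\<Sum>i=1..n. Zs i * f k (Xs i)))"
    unfolding g_def sum_distrib_left by (subst sum.swap) (simp add: mult_ac)
  also have "\<dots> = n * R"
  proof -
    have "n * W k = (\<Sum>i=1..n. Zs i * f k (Xs i))" for k using nn unfolding W_def by simp
    then have "(\<Sum>k=1..D. c k * (\<Sum>i=1..n. Zs i * f k (Xs i))) = (\<Sum>k=1..D. n * (c k * W k))"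
      by (intro sum.cong refl) (metis mult.left_commute)
    then show ?thesis unfolding R_def by (simp add: sum_distrib_left)
  qed
  finally have 3: "(\<Sum>i=1..n. Zs i * g i) = n * R" .
  from 1 2 3 have "n * (Q + A) \<le> n * (2 * R)" by (simp add: algebra_simps)
  then have QA: "Q + A \<le> 2 * R" using n by simp
  have "Q^2 \<le> A^2 * (\<Sum>j=1..D. \<Sum>k=1..D. (M j k)^2)" unfolding Q_def A_def by (rule CS_double)
  also have "\<dots> \<le> A^2 * (1/4)" using SM unfolding M_def by (intro mult_left_mono) auto
  finally have Q2: "Q^2 \<le> A^2 / 4" by simp
  have R2: "R^2 \<le> A * SW" unfolding R_def A_def SW_def by (rule Cauchy_Schwarz_ineq_sum)
  have "- Q \<le> A / 2"
  proof (rule ccontr)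
    assume "\<not> - Q \<le> A / 2"
    then have "(A/2)^2 < (-Q)^2" using A0 by (intro power_strict_mono) auto
    with Q2 show False by (simp add: power2_eq_square)
  qed
  with QA have RA: "A / 4 \<le> R" by simp
  have "A \<le> 16 * SW"
  proof (cases "A = 0")
    case True then show ?thesis using SW0 by simp
  next
    case False
    then have Ap: "A > 0" using A0 by simp
    have "(A/4)^2 \<le> R^2" using RA Ap by (intro power_mono) auto
    with R2 have "A * A \<le> A * (16 * SW)" by (simp add: power2_eq_square)
    then show ?thesis using Ap by simp
  qed
  then show ?thesis unfolding A_def SW_def W_def .
qed



lemma phi_cont[continuous_intros]: "continuous_on S (phi j)"
  unfolding phi_def by (cases "j = Suc 0"; cases "even j") (auto intro!: continuous_intros)

lemma phi_cont'[continuous_intros]: "continuous_on S g \<Longrightarrow> continuous_on S (\<lambda>x. phi j (g x))"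
  using continuous_on_compose2[OF phi_cont[of UNIV j], of S g] by auto

lemma phi_meas[measurable]: "phi j \<in> borel_measurable borel"
  by (rule borel_measurable_continuous_onI) (rule phi_cont)

lemma phi_bound: "\<bar>phi j x\<bar> \<le> sqrt 2"
proof -
  have s: "1 \<le> sqrt (2::real)" by simp
  show ?thesis unfolding phi_def using s
    by (auto simp: abs_mult intro!: mult_left_le)
qed

lemma prob_PX: "prob_space PX"
  unfolding PX_def by (rule prob_space_uniform_measure) auto

lemma ortho:
  assumes "j \<ge> 1" "k \<ge> 1"
  shows "integral\<^sup>L PX (\<lambda>x. phi j x * phi k x) = (if j = k then 1 else 0)"
proof -
  have "continuous_on UNIV (\<lambda>x. phi j x * phi k x)" by (intro continuous_on_mult phi_cont)
  from PX_integral_cont[OF this ortho_HK[OF assms]] show ?thesis by simp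
qed

lemma int_PX_prod: "integrable PX (\<lambda>x. phi j x * phi k x)"
proof -
  interpret prob_space PX by (rule prob_PX)
  show ?thesis
  proof (rule integrable_const_bound[where B=2])
    show "AE x in PX. norm (phi j x * phi k x) \<le> 2"
    proof (intro AE_I2)
      fix x
      have "\<bar>phi j x\<bar> * \<bar>phi k x\<bar> \<le> sqrt 2 * sqrt 2"
        using phi_bound by (intro mult_mono) auto
      then show "norm (phi j x * phi k x) \<le> 2" by (simp add: abs_mult)
    qed
    show "(\<lambda>x. phi j x * phi k x) \<in> borel_measurable PX" unfolding PX_def by simp
  qed
qed

lemma norm2_sq_model:
  "norm2_sq (\<lambda>t. \<Sum>k=1..D. c k * phi k t) = (\<Sum>k=1..D. (c k)^2)"
proof -
  have "norm2_sq (\<lambda>t. \<Sum>k=1..D. c k * phi k t)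
      = integral\<^sup>L PX (\<lambda>t. \<Sum>j=1..D. \<Sum>k=1..D. c j * c k * (phi j t * phi k t))"
    unfolding norm2_sq_def power2_eq_square sum_product by (simp add: mult_ac)
  also have "\<dots> = (\<Sum>j=1..D. \<Sum>k=1..D. c j * c k * integral\<^sup>L PX (\<lambda>t. phi j t * phi k t))"
    by (simp add: Bochner_Integration.integral_sum Bochner_Integration.integrable_sum int_PX_prod)
  also have "\<dots> = (\<Sum>j=1..D. \<Sum>k=1..D. if j = k then c j * c j else 0)"
    by (intro sum.cong refl) (simp add: ortho)
  also have "\<dots> = (\<Sum>k=1..D. (c k)^2)"
    by (simp add: sum.delta power2_eq_square)
  finally show ?thesis .
qed

lemma phi_in_model: "k \<in> {1..D} \<Longrightarrow> phi k \<in> model D"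
proof -
  assume k: "k \<in> {1..D}"
  have "(\<Sum>l=1..D. (if l = k then 1 else 0) * phi l x) = (\<Sum>l=1..D. if l = k then phi l x else 0)" for x
    by (intro sum.cong) auto
  then have "phi k = (\<lambda>x. \<Sum>l=1..D. (if l = k then 1 else 0) * phi l x)" using k by (simp add: sum.delta)
  then show ?thesis unfolding model_def by (intro CollectI exI[of _ "\<lambda>l. if l = k then 1 else 0"])
qed



lemma sq_diff_le: "((u::real) - v)^2 \<le> 2 * u^2 + 2 * v^2"
proof -
  have "0 \<le> (u + v)^2" by simp
  then show ?thesis by (simp add: power2_eq_square algebra_simps)
qed

lemma main_facts:
  fixes \<mu> :: "(real \<times> real) measure" and s_star s_m :: "real \<Rightarrow> real" and D :: nat and \<sigma> :: real
  assumes ps: "prob_space \<mu>" and sets: "sets \<mu> = sets borel"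
    and distr: "distr \<mu> lborel fst = uniform_measure lborel {0..2*pi}"
    and Y2: "integrable \<mu> (\<lambda>p. (snd p)^2)"
    and ce: "AE p in \<mu>. s_star (fst p) = real_cond_exp \<mu> (vimage_algebra (space \<mu>) fst borel) snd p"
    and sstar: "s_star \<in> Linf_T"
    and b: "s_m = (\<lambda>x. \<Sum>k=1..D. b k * phi k x)"
    and orth: "\<forall>g \<in> model D. inner_PX (\<lambda>t. s_star t - s_m t) g = 0"
    and z2: "(\<integral>p. (snd p - s_m (fst p))^2 \<partial>\<mu>) \<le> \<sigma>^2"
  shows "\<And>k. k \<in> {1..D} \<Longrightarrow> (\<lambda>p. (snd p - s_m (fst p)) * phi k (fst p)) \<in> borel_measurable \<mu>"
    "\<And>k. k \<in> {1..D} \<Longrightarrow> integrable \<mu> (\<lambda>p. ((snd p - s_m (fst p)) * phi k (fst p))^2)"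
    "\<And>k. k \<in> {1..D} \<Longrightarrow> integral\<^sup>L \<mu> (\<lambda>p. (snd p - s_m (fst p)) * phi k (fst p)) = 0"
    "\<And>k. k \<in> {1..D} \<Longrightarrow> integral\<^sup>L \<mu> (\<lambda>p. ((snd p - s_m (fst p)) * phi k (fst p))^2) \<le> 2 * \<sigma>^2"
    "\<And>j k. (\<lambda>p. phi j (fst p) * phi k (fst p) - (if j = k then 1 else 0)) \<in> borel_measurable \<mu>"
    "\<And>j k. integrable \<mu> (\<lambda>p. (phi j (fst p) * phi k (fst p) - (if j = k then 1 else 0))^2)"
    "\<And>j k. j \<in> {1..D} \<Longrightarrow> k \<in> {1..D} \<Longrightarrow> integral\<^sup>L \<mu> (\<lambda>p. phi j (fst p) * phi k (fst p) - (if j = k then 1 else 0)) = 0"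
    "\<And>j k. integral\<^sup>L \<mu> (\<lambda>p. (phi j (fst p) * phi k (fst p) - (if j = k then 1 else 0))^2) \<le> 9"
proof -
  interpret prob_space \<mu> by (rule ps)
  have mt: "f \<in> borel_measurable \<mu>" if "f \<in> borel_measurable borel" for f :: "real \<times> real \<Rightarrow> real"
    using that measurable_cong_sets[OF sets refl] by blast
  have fst_b: "fst \<in> borel_measurable (borel :: (real \<times> real) measure)"
    by (intro borel_measurable_continuous_onI continuous_intros)
  have snd_b: "snd \<in> borel_measurable (borel :: (real \<times> real) measure)"
    by (intro borel_measurable_continuous_onI continuous_intros)
  have fst_m: "fst \<in> borel_measurable \<mu>" using mt[OF fst_b] .
  have snd_m: "snd \<in> borel_measurable \<mu>" using mt[OF snd_b] .
  have sm_cont: "continuous_on UNIV s_m" unfolding b by (intro continuous_intros)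
  have sm_b: "s_m \<in> borel_measurable borel" by (rule borel_measurable_continuous_onI[OF sm_cont])
  define Bm where "Bm = (\<Sum>k=1..D. \<bar>b k\<bar> * sqrt 2)"
  have sm_bound: "\<bar>s_m t\<bar> \<le> Bm" for t
  proof -
    have "\<bar>s_m t\<bar> \<le> (\<Sum>k=1..D. \<bar>b k * phi k t\<bar>)" unfolding b by (rule sum_abs)
    also have "\<dots> \<le> Bm" unfolding Bm_def abs_mult
      by (intro sum_mono mult_left_mono phi_bound) auto
    finally show ?thesis .
  qed
  have ss_b: "s_star \<in> borel_measurable borel" using sstar unfolding Linf_T_def by auto
  obtain Bs where Bs: "\<And>t. \<bar>s_star t\<bar> \<le> Bs"
    using sstar unfolding Linf_T_def bounded_iff by fastforce
  define \<zeta> where "\<zeta> p = snd p - s_m (fst p)" for p :: "real \<times> real"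
  have \<zeta>_m: "\<zeta> \<in> borel_measurable \<mu>" unfolding \<zeta>_def using snd_m fst_m sm_b by measurable
  have Y_int: "integrable \<mu> snd" by (rule square_integrable_imp_integrable[OF snd_m Y2])
  have \<zeta>2_int: "integrable \<mu> (\<lambda>p. (\<zeta> p)^2)"
  proof (rule Bochner_Integration.integrable_bound[of _ "\<lambda>p. 2 * (snd p)^2 + 2 * Bm^2"])
    show "integrable \<mu> (\<lambda>p. 2 * (snd p)^2 + 2 * Bm^2)" using Y2 by auto
    show "(\<lambda>p. (\<zeta> p)^2) \<in> borel_measurable \<mu>" using \<zeta>_m by measurable
    show "AE p in \<mu>. norm ((\<zeta> p)^2) \<le> norm (2 * (snd p)^2 + 2 * Bm^2)"
    proof (intro AE_I2)
      fix p :: "real \<times> real"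
      have a: "(s_m (fst p))^2 \<le> Bm^2" using power_mono[OF sm_bound[of "fst p"] abs_ge_zero, of 2] by simp
      have "(\<zeta> p)^2 \<le> 2 * (snd p)^2 + 2 * (s_m (fst p))^2" unfolding \<zeta>_def
        by (rule sq_diff_le)
      then show "norm ((\<zeta> p)^2) \<le> norm (2 * (snd p)^2 + 2 * Bm^2)" using a by simp
    qed
  qed
  have z2': "integral\<^sup>L \<mu> (\<lambda>p. (\<zeta> p)^2) \<le> \<sigma>^2" using z2 unfolding \<zeta>_def .
  define F where "F = vimage_algebra (space \<mu>) fst (borel :: real measure)"
  have fst_pi: "fst \<in> space \<mu> \<rightarrow> space (borel :: real measure)" by simp
  have subalg: "subalgebra \<mu> F"
    unfolding subalgebra_def F_def
  proof
    show "space (vimage_algebra (space \<mu>) fst borel) = space \<mu>" by simp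
    show "sets (vimage_algebra (space \<mu>) fst borel) \<subseteq> sets \<mu>"
      unfolding sets_vimage_algebra2[OF fst_pi] using fst_m measurable_sets by blast
  qed
  interpret sfs: finite_measure_subalgebra \<mu> F
    by unfold_locales (rule subalg)
  have phiF: "(\<lambda>p. phi k (fst p)) \<in> borel_measurable F" for k
  proof -
    have "fst \<in> measurable F borel" unfolding F_def by (rule measurable_vimage_algebra1[OF fst_pi])
    then show ?thesis by measurable
  qed
  have int_phiY: "integrable \<mu> (\<lambda>p. phi k (fst p) * snd p)" for k
  proof (rule Bochner_Integration.integrable_bound[of _ "\<lambda>p. sqrt 2 * snd p"])
    show "integrable \<mu> (\<lambda>p. sqrt 2 * snd p)" using Y_int by auto
    show "(\<lambda>p. phi k (fst p) * snd p) \<in> borel_measurable \<mu>" using fst_m snd_m by measurable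
    show "AE p in \<mu>. norm (phi k (fst p) * snd p) \<le> norm (sqrt 2 * snd p)"
      by (intro AE_I2) (simp add: abs_mult mult_right_mono phi_bound)
  qed
  have bnd_int: "integrable \<mu> (\<lambda>p. u (fst p))" if "u \<in> borel_measurable borel" "\<And>t. \<bar>u t\<bar> \<le> B" for u :: "real \<Rightarrow> real" and B
  proof (rule integrable_const_bound[where B=B])
    show "AE p in \<mu>. norm (u (fst p)) \<le> B" using that by auto
    show "(\<lambda>p. u (fst p)) \<in> borel_measurable \<mu>" using that(1) fst_m by measurable
  qed
  have key: "integral\<^sup>L \<mu> (\<lambda>p. phi k (fst p) * snd p) = integral\<^sup>L \<mu> (\<lambda>p. phi k (fst p) * s_star (fst p))" for k
  proof -
    have "integral\<^sup>L \<mu> (\<lambda>p. phi k (fst p) * real_cond_exp \<mu> F snd p) = integral\<^sup>L \<mu> (\<lambda>p. phi k (fst p) * snd p)"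
      by (rule sfs.real_cond_exp_intg(2)[OF int_phiY phiF snd_m])
    moreover have "integral\<^sup>L \<mu> (\<lambda>p. phi k (fst p) * real_cond_exp \<mu> F snd p) = integral\<^sup>L \<mu> (\<lambda>p. phi k (fst p) * s_star (fst p))"
    proof (rule integral_cong_AE)
      show "(\<lambda>p. phi k (fst p) * real_cond_exp \<mu> F snd p) \<in> borel_measurable \<mu>"
        using fst_m by measurable
      show "(\<lambda>p. phi k (fst p) * s_star (fst p)) \<in> borel_measurable \<mu>"
        using fst_m ss_b by measurable
      show "AE p in \<mu>. phi k (fst p) * real_cond_exp \<mu> F snd p = phi k (fst p) * s_star (fst p)"
        using ce unfolding F_def by eventually_elim simp
    qed
    ultimately show ?thesis by simp
  qed
  have fst_l: "fst \<in> measurable \<mu> lborel" using fst_m by simp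
  have toPX: "integral\<^sup>L \<mu> (\<lambda>p. u (fst p)) = integral\<^sup>L PX u" if "u \<in> borel_measurable borel" for u :: "real \<Rightarrow> real"
  proof -
    have "integral\<^sup>L (distr \<mu> lborel fst) u = integral\<^sup>L \<mu> (\<lambda>p. u (fst p))"
      by (rule integral_distr[OF fst_l]) (use that in simp)
    then show ?thesis using distr unfolding PX_def by simp
  qed
  have phi2: "(phi k t)^2 \<le> 2" for k t
    using power_mono[OF phi_bound[of k t] abs_ge_zero, of 2] by simp
  show hW_m: "(\<lambda>p. (snd p - s_m (fst p)) * phi k (fst p)) \<in> borel_measurable \<mu>" for k
    using \<zeta>_m fst_m unfolding \<zeta>_def by measurable
  have hW_le: "((snd p - s_m (fst p)) * phi k (fst p))^2 \<le> 2 * (\<zeta> p)^2" for k p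
    unfolding \<zeta>_def power_mult_distrib using phi2[of k "fst p"]
    by (simp add: mult.commute mult_right_mono)
  show hW2: "integrable \<mu> (\<lambda>p. ((snd p - s_m (fst p)) * phi k (fst p))^2)" for k
  proof (rule Bochner_Integration.integrable_bound[of _ "\<lambda>p. 2 * (\<zeta> p)^2"])
    show "integrable \<mu> (\<lambda>p. 2 * (\<zeta> p)^2)" using \<zeta>2_int by auto
    show "(\<lambda>p. ((snd p - s_m (fst p)) * phi k (fst p))^2) \<in> borel_measurable \<mu>" using hW_m by measurable
    show "AE p in \<mu>. norm (((snd p - s_m (fst p)) * phi k (fst p))^2) \<le> norm (2 * (\<zeta> p)^2)"
      using hW_le by (intro AE_I2) simp
  qed
  show "integral\<^sup>L \<mu> (\<lambda>p. ((snd p - s_m (fst p)) * phi k (fst p))^2) \<le> 2 * \<sigma>^2" for k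
  proof -
    have "integral\<^sup>L \<mu> (\<lambda>p. ((snd p - s_m (fst p)) * phi k (fst p))^2) \<le> integral\<^sup>L \<mu> (\<lambda>p. 2 * (\<zeta> p)^2)"
      by (rule integral_mono[OF hW2]) (use \<zeta>2_int hW_le in auto)
    also have "\<dots> = 2 * integral\<^sup>L \<mu> (\<lambda>p. (\<zeta> p)^2)" by simp
    finally show ?thesis using z2' by simp
  qed
  show "integral\<^sup>L \<mu> (\<lambda>p. (snd p - s_m (fst p)) * phi k (fst p)) = 0" if k: "k \<in> {1..D}" for k
  proof -
    have smphi_b: "(\<lambda>t. s_m t * phi k t) \<in> borel_measurable borel" using sm_b by measurable
    have ssphi_b: "(\<lambda>t. s_star t * phi k t) \<in> borel_measurable borel" using ss_b by measurable
    have i1: "integrable \<mu> (\<lambda>p. s_m (fst p) * phi k (fst p))"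
      by (rule bnd_int[OF smphi_b, of "Bm * sqrt 2"]) (use mult_mono[OF sm_bound phi_bound order_trans[OF abs_ge_zero sm_bound] abs_ge_zero] in \<open>simp add: abs_mult\<close>)
    have i2: "integrable \<mu> (\<lambda>p. s_star (fst p) * phi k (fst p))"
      by (rule bnd_int[OF ssphi_b, of "Bs * sqrt 2"]) (use mult_mono[OF Bs phi_bound order_trans[OF abs_ge_zero Bs] abs_ge_zero] in \<open>simp add: abs_mult\<close>)
    have "integral\<^sup>L \<mu> (\<lambda>p. (snd p - s_m (fst p)) * phi k (fst p))
        = integral\<^sup>L \<mu> (\<lambda>p. phi k (fst p) * snd p - s_m (fst p) * phi k (fst p))"
      by (rule Bochner_Integration.integral_cong) (auto simp: algebra_simps)
    also have "\<dots> = integral\<^sup>L \<mu> (\<lambda>p. phi k (fst p) * snd p) - integral\<^sup>L \<mu> (\<lambda>p. s_m (fst p) * phi k (fst p))"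
      by (rule Bochner_Integration.integral_diff[OF int_phiY i1])
    also have "\<dots> = integral\<^sup>L \<mu> (\<lambda>p. s_star (fst p) * phi k (fst p)) - integral\<^sup>L \<mu> (\<lambda>p. s_m (fst p) * phi k (fst p))"
      unfolding key by (simp add: mult.commute)
    also have "\<dots> = integral\<^sup>L \<mu> (\<lambda>p. s_star (fst p) * phi k (fst p) - s_m (fst p) * phi k (fst p))"
      by (rule Bochner_Integration.integral_diff[OF i2 i1, symmetric])
    also have "\<dots> = integral\<^sup>L \<mu> (\<lambda>p. (\<lambda>t. (s_star t - s_m t) * phi k t) (fst p))"
      by (simp add: algebra_simps)
    also have "\<dots> = integral\<^sup>L PX (\<lambda>t. (s_star t - s_m t) * phi k t)"
      by (rule toPX) (use ss_b sm_b in measurable)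
    also have "\<dots> = inner_PX (\<lambda>t. s_star t - s_m t) (phi k)" unfolding inner_PX_def ..
    also have "\<dots> = 0" using orth phi_in_model[OF k] by blast
    finally show ?thesis .
  qed
  show hG_m: "(\<lambda>p. phi j (fst p) * phi k (fst p) - (if j = k then 1 else 0)) \<in> borel_measurable \<mu>" for j k
    using fst_m by measurable
  have hG_bound: "\<bar>phi j t * phi k t - (if j = k then 1 else 0)\<bar> \<le> 3" for j k t
  proof -
    have "\<bar>phi j t * phi k t\<bar> \<le> sqrt 2 * sqrt 2" unfolding abs_mult by (intro mult_mono phi_bound) auto
    then have h: "phi j t * phi k t \<le> 2 \<and> - (phi j t * phi k t) \<le> 2" by (simp add: abs_le_iff)
    then show ?thesis by (cases "j = k") (simp_all add: abs_le_iff)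
  qed
  have hG2_bound: "(phi j t * phi k t - (if j = k then 1 else 0))^2 \<le> 9" for j k t
    using power_mono[OF hG_bound[of j t k] abs_ge_zero, of 2] by simp
  show hG2: "integrable \<mu> (\<lambda>p. (phi j (fst p) * phi k (fst p) - (if j = k then 1 else 0))^2)" for j k
    using bnd_int[of "\<lambda>t. (phi j t * phi k t - (if j = k then 1 else 0))^2" 9] hG2_bound by simp
  show "integral\<^sup>L \<mu> (\<lambda>p. (phi j (fst p) * phi k (fst p) - (if j = k then 1 else 0))^2) \<le> 9" for j k
  proof -
    have "integral\<^sup>L \<mu> (\<lambda>p. (phi j (fst p) * phi k (fst p) - (if j = k then 1 else 0))^2) \<le> integral\<^sup>L \<mu> (\<lambda>p. 9)"
      by (rule integral_mono[OF hG2]) (use hG2_bound in simp_all)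
    then show ?thesis by (simp add: prob_space)
  qed
  show "integral\<^sup>L \<mu> (\<lambda>p. phi j (fst p) * phi k (fst p) - (if j = k then 1 else 0)) = 0"
    if "j \<in> {1..D}" "k \<in> {1..D}" for j k
  proof -
    interpret PXp: prob_space PX by (rule prob_PX)
    have e1: "integral\<^sup>L \<mu> (\<lambda>p. (\<lambda>t. phi j t * phi k t - (if j = k then 1 else 0)) (fst p)) = integral\<^sup>L PX (\<lambda>t. phi j t * phi k t - (if j = k then 1 else 0))"
      by (rule toPX) measurable
    have e2: "integral\<^sup>L PX (\<lambda>t. phi j t * phi k t - (if j = k then 1 else 0)) = integral\<^sup>L PX (\<lambda>t. phi j t * phi k t) - (if j = k then 1 else 0)"
      using int_PX_prod[of j k] by (simp add: PXp.prob_space)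
    show ?thesis using e1 e2 ortho[of j k] that by simp
  qed
qed


lemma main_lemma:
  fixes \<mu> :: "(real \<times> real) measure" and s_star s_m :: "real \<Rightarrow> real"
    and s_hat :: "(nat \<Rightarrow> real \<times> real) \<Rightarrow> real \<Rightarrow> real" and D n :: nat and \<sigma> x :: real
  assumes ps: "prob_space \<mu>" and sets: "sets \<mu> = sets borel"
    and distr: "distr \<mu> lborel fst = uniform_measure lborel {0..2*pi}"
    and Y2: "integrable \<mu> (\<lambda>p. (snd p)^2)"
    and ce: "AE p in \<mu>. s_star (fst p) = real_cond_exp \<mu> (vimage_algebra (space \<mu>) fst borel) snd p"
    and sstar: "s_star \<in> Linf_T"
    and sm: "s_m \<in> model D"
    and orth: "\<forall>g \<in> model D. inner_PX (\<lambda>t. s_star t - s_m t) g = 0"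
    and z2: "(\<integral>p. (snd p - s_m (fst p))^2 \<partial>\<mu>) \<le> \<sigma>^2"
    and shat: "\<forall>\<omega> \<in> space (PiM {1..n} (\<lambda>_. \<mu>)). s_hat \<omega> \<in> model D \<and>
          (\<forall>s \<in> model D. emp_risk n \<omega> (s_hat \<omega>) \<le> emp_risk n \<omega> s)"
    and D1: "D \<ge> 1" and n1: "n \<ge> 1" and xpos: "x > 0" and sig: "\<sigma> > 0"
    and small: "36 * real D ^ 2 * x \<le> real n"
  shows "\<exists>E \<in> sets (PiM {1..n} (\<lambda>_. \<mu>)).
         measure (PiM {1..n} (\<lambda>_. \<mu>)) E \<ge> 1 - 2 / x \<and>
         (\<forall>\<omega> \<in> E. norm2_sq (\<lambda>t. s_hat \<omega> t - s_m t) \<le> 32 * \<sigma>^2 * real D * x / real n)"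
proof -
  obtain b where b: "s_m = (\<lambda>x. \<Sum>k=1..D. b k * phi k x)" using sm unfolding model_def by blast
  note F = main_facts[OF ps sets distr Y2 ce sstar b orth z2]
  define P where "P = PiM {1..n} (\<lambda>_. \<mu>)"
  interpret P: prob_space P unfolding P_def by (intro prob_space_PiM ps)
  have n0: "n > 0" using n1 by simp
  define hW where "hW k p = (snd p - s_m (fst p)) * phi k (fst p)" for k and p :: "real \<times> real"
  define hG where "hG j k p = phi j (fst p) * phi k (fst p) - (if j = k then 1 else 0)" for j k and p :: "real \<times> real"
  define SW where "SW \<omega> = (\<Sum>k=1..D. ((\<Sum>i=1..n. hW k (\<omega> i)) / n)^2)" for \<omega> :: "nat \<Rightarrow> real \<times> real"
  define SM where "SM \<omega> = (\<Sum>j=1..D. \<Sum>k=1..D. ((\<Sum>i=1..n. hG j k (\<omega> i)) / n)^2)" for \<omega> :: "nat \<Rightarrow> real \<times> real"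
  define t where "t = 2 * real D * \<sigma>^2 * x / n"
  have tpos: "t > 0" unfolding t_def using D1 n1 xpos sig by simp
  have VW: "integrable P (\<lambda>\<omega>. ((\<Sum>i=1..n. hW k (\<omega> i)) / n)^2) \<and>
            integral\<^sup>L P (\<lambda>\<omega>. ((\<Sum>i=1..n. hW k (\<omega> i)) / n)^2) \<le> 2 * \<sigma>^2 / n" if k: "k \<in> {1..D}" for k
  proof -
    note V = var_avg[OF ps F(1)[OF k] F(2)[OF k] F(3)[OF k] n0]
    show ?thesis using V F(4)[OF k] n0 unfolding P_def hW_def by (simp add: divide_right_mono)
  qed
  have VG: "integrable P (\<lambda>\<omega>. ((\<Sum>i=1..n. hG j k (\<omega> i)) / n)^2) \<and>
            integral\<^sup>L P (\<lambda>\<omega>. ((\<Sum>i=1..n. hG j k (\<omega> i)) / n)^2) \<le> 9 / n" if j: "j \<in> {1..D}" and k: "k \<in> {1..D}" for j k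
  proof -
    note V = var_avg[OF ps F(5) F(6) F(7)[OF j k] n0]
    show ?thesis using V F(8)[of j k] n0 unfolding P_def hG_def by (simp add: divide_right_mono)
  qed
  have SW_int: "integrable P SW" unfolding SW_def
    by (intro Bochner_Integration.integrable_sum) (use VW in auto)
  have SM_int: "integrable P SM" unfolding SM_def
    by (intro Bochner_Integration.integrable_sum) (use VG in auto)
  have SW_E: "integral\<^sup>L P SW \<le> real D * (2 * \<sigma>^2 / n)"
  proof -
    have "integral\<^sup>L P SW = (\<Sum>k=1..D. integral\<^sup>L P (\<lambda>\<omega>. ((\<Sum>i=1..n. hW k (\<omega> i)) / n)^2))"
      unfolding SW_def by (rule Bochner_Integration.integral_sum) (use VW in auto)
    also have "\<dots> \<le> (\<Sum>k=1..D. 2 * \<sigma>^2 / n)" by (intro sum_mono) (use VW in auto)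
    finally show ?thesis by simp
  qed
  have SM_E: "integral\<^sup>L P SM \<le> real D * (real D * (9 / n))"
  proof -
    have "integral\<^sup>L P SM = (\<Sum>j=1..D. integral\<^sup>L P (\<lambda>\<omega>. \<Sum>k=1..D. ((\<Sum>i=1..n. hG j k (\<omega> i)) / n)^2))"
      unfolding SM_def by (rule Bochner_Integration.integral_sum) (intro Bochner_Integration.integrable_sum; use VG in auto)
    also have "\<dots> = (\<Sum>j=1..D. \<Sum>k=1..D. integral\<^sup>L P (\<lambda>\<omega>. ((\<Sum>i=1..n. hG j k (\<omega> i)) / n)^2))"
      by (intro sum.cong refl Bochner_Integration.integral_sum) (use VG in auto)
    also have "\<dots> \<le> (\<Sum>j=1..D. \<Sum>k=1..D. 9 / n)" by (intro sum_mono) (use VG in auto)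
    finally show ?thesis by simp
  qed
  define A where "A = {\<omega> \<in> space P. 1/4 \<le> SM \<omega>}"
  define B where "B = {\<omega> \<in> space P. t \<le> SW \<omega>}"
  have SM_m: "SM \<in> borel_measurable P" using SM_int by (rule borel_measurable_integrable)
  have SW_m: "SW \<in> borel_measurable P" using SW_int by (rule borel_measurable_integrable)
  have A_s: "A \<in> sets P" unfolding A_def using SM_m by measurable
  have B_s: "B \<in> sets P" unfolding B_def using SW_m by measurable
  have mA: "measure P A \<le> integral\<^sup>L P SM / (1/4)"
    unfolding A_def by (rule integral_Markov_inequality_measure[OF SM_int A_s])
       (auto simp: SM_def intro!: sum_nonneg)
  have mB: "measure P B \<le> integral\<^sup>L P SW / t"
    unfolding B_def by (rule integral_Markov_inequality_measure[OF SW_int B_s])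
       (auto simp: SW_def tpos intro!: sum_nonneg)
  have mA': "measure P A \<le> 1 / x"
  proof -
    have "measure P A \<le> 36 * real D ^ 2 / n" using mA SM_E by (simp add: power2_eq_square)
    also have "\<dots> \<le> 1 / x" using small xpos n0 by (simp add: field_simps)
    finally show ?thesis .
  qed
  have mB': "measure P B \<le> 1 / x"
  proof -
    have "integral\<^sup>L P SW / t \<le> (real D * (2 * \<sigma>^2 / n)) / t"
      using divide_right_mono[OF SW_E, of t] tpos by simp
    also have "\<dots> = 1 / x" unfolding t_def using D1 n0 sig xpos by (simp add: field_simps)
    finally show ?thesis using mB by simp
  qed
  define E where "E = space P - (A \<union> B)"
  have E_s: "E \<in> sets P" unfolding E_def using A_s B_s by auto
  have mE: "measure P E \<ge> 1 - 2 / x"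
  proof -
    have "measure P E = 1 - measure P (A \<union> B)" unfolding E_def
      using A_s B_s by (simp add: P.prob_compl)
    moreover have "measure P (A \<union> B) \<le> measure P A + measure P B" by (rule measure_Un_le[OF A_s B_s])
    ultimately show ?thesis using mA' mB' by simp
  qed
  have good: "norm2_sq (\<lambda>t. s_hat \<omega> t - s_m t) \<le> 32 * \<sigma>^2 * real D * x / real n" if w: "\<omega> \<in> E" for \<omega>
  proof -
    have ws: "\<omega> \<in> space P" and SMw: "SM \<omega> < 1/4" and SWw: "SW \<omega> < t"
      using w unfolding E_def A_def B_def by auto
    have sh: "s_hat \<omega> \<in> model D" and opt0: "emp_risk n \<omega> (s_hat \<omega>) \<le> emp_risk n \<omega> s_m"
      using shat ws sm unfolding P_def by auto
    obtain a where a: "s_hat \<omega> = (\<lambda>x. \<Sum>k=1..D. a k * phi k x)" using sh unfolding model_def by blast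
    define c where "c k = a k - b k" for k
    have gdef: "s_hat \<omega> y - s_m y = (\<Sum>k=1..D. c k * phi k y)" for y
      unfolding a b c_def by (simp add: sum_subtractf left_diff_distrib)
    have nrm: "norm2_sq (\<lambda>t. s_hat \<omega> t - s_m t) = (\<Sum>k=1..D. (c k)^2)"
      unfolding gdef by (rule norm2_sq_model)
    define Xs where "Xs i = fst (\<omega> i)" for i
    define Zs where "Zs i = snd (\<omega> i) - s_m (fst (\<omega> i))" for i
    have opt: "(\<Sum>i=1..n. (Zs i - (\<Sum>k=1..D. c k * phi k (Xs i)))^2) \<le> (\<Sum>i=1..n. (Zs i)^2)"
    proof -
      have pe: "Zs i - (\<Sum>k=1..D. c k * phi k (Xs i)) = snd (\<omega> i) - s_hat \<omega> (fst (\<omega> i))" for i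
        unfolding Zs_def Xs_def gdef[symmetric] by simp
      have e: "(\<Sum>i=1..n. (Zs i - (\<Sum>k=1..D. c k * phi k (Xs i)))^2) = (\<Sum>i=1..n. (snd (\<omega> i) - s_hat \<omega> (fst (\<omega> i)))^2)"
        unfolding pe ..
      have "(1 / real n) * (\<Sum>i=1..n. (snd (\<omega> i) - s_hat \<omega> (fst (\<omega> i)))^2) \<le> (1 / real n) * (\<Sum>i=1..n. (Zs i)^2)"
        using opt0 unfolding emp_risk_def Zs_def .
      then have "(\<Sum>i=1..n. (snd (\<omega> i) - s_hat \<omega> (fst (\<omega> i)))^2) \<le> (\<Sum>i=1..n. (Zs i)^2)"
        using n0 by (simp add: divide_le_cancel)
      then show ?thesis unfolding e .
    qed
    have SM': "(\<Sum>j=1..D. \<Sum>k=1..D. ((\<Sum>i=1..n. phi j (Xs i) * phi k (Xs i) - (if j = k then 1 else 0)) / n)^2) \<le> 1/4"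
      using SMw unfolding SM_def hG_def Xs_def by simp
    have "(\<Sum>k=1..D. (c k)^2) \<le> 16 * (\<Sum>k=1..D. ((\<Sum>i=1..n. Zs i * phi k (Xs i)) / n)^2)"
      by (rule det_bound[OF n0 opt SM'])
    also have "(\<Sum>k=1..D. ((\<Sum>i=1..n. Zs i * phi k (Xs i)) / n)^2) = SW \<omega>"
      unfolding SW_def hW_def Zs_def Xs_def ..
    finally have "(\<Sum>k=1..D. (c k)^2) \<le> 16 * t" using SWw by simp
    then show ?thesis unfolding nrm t_def by (simp add: mult_ac)
  qed
  show ?thesis using E_s mE good unfolding P_def by blast
qed


theorem theorem3:
  shows "\<forall>\<nu>::real. \<nu> > 1/2 \<longrightarrow>
   (\<exists>L_nu::real. L_nu > 0 \<and>
   (\<forall>L1 L2::real. L1 > 0 \<and> L2 > 0 \<longrightarrow>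
   (\<exists>C::real. \<exists>\<beta>0::real. \<exists>n0::nat. C > 0 \<and> \<beta>0 > 0 \<and>
   (\<forall>\<sigma>::real. \<sigma> > 0 \<longrightarrow>
   (\<exists>LL::real. LL > 0 \<and>
   (\<forall>(\<mu>::(real \<times> real) measure) (s_star::real \<Rightarrow> real) (s_m::real \<Rightarrow> real)
      (s_hat::(nat \<Rightarrow> real \<times> real) \<Rightarrow> real \<Rightarrow> real) (D::nat) (n::nat) (x::real).
      prob_space \<mu> \<and> sets \<mu> = sets borel \<and>
      distr \<mu> lborel fst = uniform_measure lborel {0..2*pi} \<and>
      integrable \<mu> (\<lambda>p. (snd p)^2) \<and>
      (AE p in \<mu>. s_star (fst p) = real_cond_exp \<mu> (vimage_algebra (space \<mu>) fst borel) snd p) \<and>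
      s_star \<in> Lambda \<nu> L1 L2 \<and>
      s_m \<in> model D \<and> (\<forall>g \<in> model D. inner_PX (\<lambda>t. s_star t - s_m t) g = 0) \<and>
      prob_space.indep_var \<mu> borel fst borel (\<lambda>p. snd p - s_m (fst p)) \<and>
      (\<integral>p. (snd p - s_m (fst p))^2 \<partial>\<mu>) \<le> \<sigma>^2 \<and>
      (\<forall>\<omega> \<in> space (PiM {1..n} (\<lambda>_. \<mu>)). s_hat \<omega> \<in> model D \<and>
          (\<forall>s \<in> model D. emp_risk n \<omega> (s_hat \<omega>) \<le> emp_risk n \<omega> s)) \<and>
      0 < (2 * sqrt 2 * L1 / L2) powr (1/\<nu>) \<and>
      (2 * sqrt 2 * L1 / L2) powr (1/\<nu>) \<le> real D \<and>
      real D \<le> L_nu * (real n / ln (real n)) powr (1 / (2 * (\<nu> + 1))) \<and>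
      0 < x \<and> x < LL * real n / real D powr (2 * (\<nu> + 1)) \<and>
      n \<ge> n0
      \<longrightarrow>
      (\<exists>E \<in> sets (PiM {1..n} (\<lambda>_. \<mu>)).
         measure (PiM {1..n} (\<lambda>_. \<mu>)) E
           \<ge> 1 - exp (- (\<beta>0^2 * real n / 4)) - 1 / (real n)^2 - 2 / x \<and>
         (\<forall>\<omega> \<in> E. norm2_sq (\<lambda>t. s_hat \<omega> t - s_m t)
                     \<le> C * \<sigma>^2 * real D * x / real n))))))))"
  apply (intro allI impI)
  apply (rule exI[of _ 1], rule conjI, simp)
  apply (intro allI impI)
  apply (rule exI[of _ 32], rule exI[of _ 1], rule exI[of _ 1], rule conjI, simp, rule conjI, simp)
  apply (intro allI impI)
  apply (rule exI[of _ "1/36"], rule conjI, simp)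
  apply (intro allI impI)
  apply (elim conjE)
  subgoal premises prems for \<nu> L1 L2 \<sigma> \<mu> s_star s_m s_hat D n x
  proof -
    have nu: "\<nu> > 1/2" and L1: "L1 > 0" and L2: "L2 > 0" and sig: "\<sigma> > 0" by (fact prems)+
    have ps: "prob_space \<mu>" and sets: "sets \<mu> = sets borel"
      and distr: "distr \<mu> lborel fst = uniform_measure lborel {0..2*pi}"
      and Y2: "integrable \<mu> (\<lambda>p. (snd p)^2)"
      and ce: "AE p in \<mu>. s_star (fst p) = real_cond_exp \<mu> (vimage_algebra (space \<mu>) fst borel) snd p"
      and sL: "s_star \<in> Lambda \<nu> L1 L2"
      and sm: "s_m \<in> model D"
      and orth: "\<forall>g \<in> model D. inner_PX (\<lambda>t. s_star t - s_m t) g = 0"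
      and z2: "(\<integral>p. (snd p - s_m (fst p))^2 \<partial>\<mu>) \<le> \<sigma>^2"
      and shat: "\<forall>\<omega> \<in> space (PiM {1..n} (\<lambda>_. \<mu>)). s_hat \<omega> \<in> model D \<and>
          (\<forall>s \<in> model D. emp_risk n \<omega> (s_hat \<omega>) \<le> emp_risk n \<omega> s)"
      and Dlo1: "0 < (2 * sqrt 2 * L1 / L2) powr (1/\<nu>)"
      and Dlo2: "(2 * sqrt 2 * L1 / L2) powr (1/\<nu>) \<le> real D"
      and xpos: "0 < x" and xup: "x < 1/36 * real n / real D powr (2 * (\<nu> + 1))"
      and n1: "n \<ge> 1"
      by (fact prems)+
    have sstar: "s_star \<in> Linf_T" using sL unfolding Lambda_def by auto
    have "real D > 0" using Dlo1 Dlo2 by linarith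
    then have D1: "D \<ge> 1" by simp
    have Dp: "real D powr 2 \<le> real D powr (2 * (\<nu> + 1))"
      by (rule powr_mono) (use D1 nu in auto)
    have Dpos: "real D powr (2 * (\<nu> + 1)) > 0" using D1 by simp
    have "x * (36 * real D powr (2 * (\<nu> + 1))) < real n"
    proof -
      have "x < real n / (36 * real D powr (2 * (\<nu> + 1)))" using xup by simp
      then show ?thesis using Dpos by (simp add: pos_less_divide_eq)
    qed
    moreover have "36 * real D ^ 2 * x \<le> x * (36 * real D powr (2 * (\<nu> + 1)))"
    proof -
      have "real D ^ 2 = real D powr 2" by (simp add: powr_numeral)
      then have "real D ^ 2 \<le> real D powr (2 * (\<nu> + 1))" using Dp by simp
      then show ?thesis using xpos by (simp add: mult_ac)
    qed
    ultimately have small: "36 * real D ^ 2 * x \<le> real n" by simp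
    obtain E where E: "E \<in> sets (PiM {1..n} (\<lambda>_. \<mu>))"
      "measure (PiM {1..n} (\<lambda>_. \<mu>)) E \<ge> 1 - 2 / x"
      "\<forall>\<omega> \<in> E. norm2_sq (\<lambda>t. s_hat \<omega> t - s_m t) \<le> 32 * \<sigma>^2 * real D * x / real n"
      using main_lemma[OF ps sets distr Y2 ce sstar sm orth z2 shat D1 n1 xpos sig small] by blast
    have "1 - exp (- (1^2 * real n / 4)) - 1 / (real n)^2 - 2 / x \<le> 1 - 2 / x"
    proof -
      have "0 \<le> 1 / (real n)^2" by simp
      moreover have "0 < exp (- (1^2 * real n / 4))" by simp
      ultimately show ?thesis by linarith
    qed
    then have "1 - exp (- (1^2 * real n / 4)) - 1 / (real n)^2 - 2 / x \<le> measure (PiM {1..n} (\<lambda>_. \<mu>)) E"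
      using E(2) by linarith
    then show ?thesis using E(1,3) by blast
  qed
  done

end
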